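(* Let $0<\kappa<1$, $\lambda=\sqrt{1-\kappa^2}$, and let $k\in(0,1)$ be defined by $k^2=\frac{1-\lambda}{1+\lambda}$. For $\phi$ near $0$ define $$u(\phi)=\int_0^{\phi} F\!\left(\tfrac14,\tfrac34;\tfrac12;\kappa^2\sin^2\theta\right)\,\mathrm{d}\theta ,$$ let $u\mapsto\phi(u)$ be the local inverse near $0$ with $\phi(0)=0$, and set $c(u)=\cos\phi(u)$. Let $\mathrm{cn},\mathrm{dn}$ be the Jacobian elliptic functions of modulus $k$. Then $$c^2(u)=\mathrm{cn}^2\!\left[(1+k^2)^{-1/2}u\right]\,\mathrm{dn}^2\!\left[(1+k^2)^{-1/2}u\right].$$
   Context: $F(a,b;c;z)$ denotes the Gauss hypergeometric function ${}_2F_1(a,b;c;z)$. $\mathrm{sn},\mathrm{cn},\mathrm{dn}$ are the standard Jacobian elliptic functions of modulus $k$. The identity holds near $u=0$ (and hence for the meromorphic extension of $c^2$). *)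

theory Defs
  imports "HOL-Analysis.Analysis"
begin

text \<open>Gauss hypergeometric function F(a,b;c;z) as its power series (for real arguments, |z| < 1).\<close>
definition hyp2F1 :: "real \<Rightarrow> real \<Rightarrow> real \<Rightarrow> real \<Rightarrow> real" where
  "hyp2F1 a b c z =
     (\<Sum>n. pochhammer a n * pochhammer b n / (pochhammer c n * fact n) * z ^ n)"

definition integral0 :: "(real \<Rightarrow> real) \<Rightarrow> real \<Rightarrow> real" where
  "integral0 f x = (if 0 \<le> x then integral {0..x} f else - integral {x..0} f)"

definition ellF :: "real \<Rightarrow> real \<Rightarrow> real" where
  "ellF k \<phi> = integral0 (\<lambda>\<theta>. 1 / sqrt (1 - k\<^sup>2 * (sin \<theta>)\<^sup>2)) \<phi>"

text \<open>Jacobi amplitude: inverse of ellF (for 0 < k < 1 this is a bijection of the reals).\<close>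
definition jam :: "real \<Rightarrow> real \<Rightarrow> real" where
  "jam k u = (THE \<phi>. ellF k \<phi> = u)"

definition jsn :: "real \<Rightarrow> real \<Rightarrow> real" where
  "jsn k u = sin (jam k u)"

definition jcn :: "real \<Rightarrow> real \<Rightarrow> real" where
  "jcn k u = cos (jam k u)"

definition jdn :: "real \<Rightarrow> real \<Rightarrow> real" where
  "jdn k u = sqrt (1 - k\<^sup>2 * (jsn k u)\<^sup>2)"

end

theory Submission
  imports Defs
begin

lemma integral0_deriv:
  fixes f :: "real \<Rightarrow> real"
  assumes cf: "continuous_on UNIV f"
  shows "(integral0 f has_real_derivative f x) (at x)"
proof -
  define a where "a = -(\<bar>x\<bar>+1)"
  define b where "b = \<bar>x\<bar>+1"
  have eq: "integral0 f y = integral {a..y} f - integral {a..0} f" if "y \<in> {a<..<b}" for y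
  proof (cases "0 \<le> y")
    case True
    have "integral {a..0} f + integral {0..y} f = integral {a..y} f"
      using Henstock_Kurzweil_Integration.integral_combine[where a=a and c=0 and b=y and f=f] True a_def integrable_continuous_interval[of a y f] continuous_on_subset[OF cf] by auto
    then show ?thesis using True by (simp add: integral0_def)
  next
    case False
    have "integral {a..y} f + integral {y..0} f = integral {a..0} f"
      using Henstock_Kurzweil_Integration.integral_combine[where a=a and c=y and b=0 and f=f] False that a_def integrable_continuous_interval[of a 0 f] continuous_on_subset[OF cf] by auto
    then show ?thesis using False by (simp add: integral0_def)
  qed
  have "((\<lambda>y. integral {a..y} f) has_real_derivative f x) (at x within {a..b})"
    by (rule integral_has_real_derivative) (auto simp: a_def b_def intro: continuous_on_subset[OF cf])
  moreover have "at x within {a..b} = at x"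
    by (rule at_within_interior) (auto simp: a_def b_def)
  ultimately have "((\<lambda>y. integral {a..y} f - integral {a..0} f) has_real_derivative f x) (at x)"
    by (auto intro!: derivative_eq_intros)
  then show ?thesis
    by (rule has_field_derivative_transform_within_open[where S="{a<..<b}"]) (auto simp: eq a_def b_def)
qed

lemma hyp_closed:
  fixes t :: real
  assumes t: "\<bar>t\<bar> < 1"
  shows "hyp2F1 (1/4) (3/4) (1/2) (t\<^sup>2) = (1 / sqrt (1 + t) + 1 / sqrt (1 - t)) / 2"
proof -
  define p where "p m = pochhammer (1/2::real) m / fact m" for m
  have g: "(-(1/2)::real) gchoose m = (-1)^m * p m" for m
    by (simp add: gbinomial_pochhammer p_def)
  have s1: "(\<lambda>m. (-1)^m * p m * t^m) sums ((1 + t) powr (-1/2))"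
    using gen_binomial_real[OF t, of "-1/2"] by (simp add: g)
  have s2: "(\<lambda>m. (-1)^m * p m * (-t)^m) sums ((1 + -t) powr (-1/2))"
    using gen_binomial_real[of "-t" "-1/2"] t by (simp add: g)
  have "(\<lambda>m. ((-1)^m * p m * t^m + (-1)^m * p m * (-t)^m) / 2) sums
           (((1 + t) powr (-1/2) + (1 + -t) powr (-1/2)) / 2)"
    by (intro sums_divide sums_add s1 s2)
  also have "(\<lambda>m. ((-1)^m * p m * t^m + (-1)^m * p m * (-t)^m) / 2) = (\<lambda>m. if even m then p m * t^m else 0)"
    by (auto simp: fun_eq_iff power_minus')
  finally have s3: "(\<lambda>m. if even m then p m * t^m else 0) sums (((1 + t) powr (-1/2) + (1 + -t) powr (-1/2)) / 2)" .
  have s4: "(\<lambda>n. p (2 * n) * t^(2 * n)) sums (((1 + t) powr (-1/2) + (1 + -t) powr (-1/2)) / 2)"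
  proof -
    have z: "(if even m then p m * t^m else 0) = 0" if "m \<notin> range (\<lambda>n. 2 * n)" for m
      using that by (auto elim!: evenE)
    show ?thesis
      using sums_mono_reindex[of "\<lambda>n. 2 * n" "\<lambda>m. if even m then p m * t^m else 0", OF _ z] s3
      by (auto simp: strict_mono_def)
  qed
  have trm: "p (2 * n) * t^(2 * n) = pochhammer (1/4) n * pochhammer (3/4) n / (pochhammer (1/2) n * fact n) * (t\<^sup>2)^n" for n
  proof -
    have "pochhammer (1/2::real) (2 * n) = pochhammer (2 * (1/4)) (2 * n)" by simp
    also have "\<dots> = of_nat (2^(2 * n)) * pochhammer (1/4) n * pochhammer (3/4) n"
      by (subst pochhammer_double) (simp add: field_simps)
    moreover have "t^(2 * n) = (t\<^sup>2)^n" by (simp add: power_mult)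
    ultimately show ?thesis unfolding p_def fact_double
      by (simp add: field_simps)
  qed
  have "hyp2F1 (1/4) (3/4) (1/2) (t\<^sup>2) = ((1 + t) powr (-1/2) + (1 + -t) powr (-1/2)) / 2"
    unfolding hyp2F1_def using s4 by (simp add: trm sums_iff)
  also have "(1 + t) powr (-1/2) = 1 / sqrt (1 + t)"
    using t by (simp add: powr_minus_divide powr_half_sqrt del: powr_minus)
  also have "(1 + -t) powr (-1/2) = 1 / sqrt (1 - t)"
    using t by (simp add: powr_minus_divide powr_half_sqrt del: powr_minus)
  finally show ?thesis .
qed

lemma key_deriv:
  fixes k \<kappa> \<psi> :: real and U :: "real \<Rightarrow> real"
  assumes k: "0 < k" "k < 1" and \<psi>: "\<bar>\<psi>\<bar> < pi/2"
    and Uder: "\<And>x. (U has_real_derivative (1/sqrt(1+\<kappa> * sin x) + 1/sqrt(1-\<kappa> * sin x))/2) (at x)"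
    and \<kappa>: "\<kappa> = 2 * k/(1+k\<^sup>2)"
  shows "((\<lambda>\<psi>. U (arcsin (sin \<psi> * sqrt(1+k\<^sup>2-k\<^sup>2 * (sin \<psi>)\<^sup>2)))) has_real_derivative
            sqrt(1+k\<^sup>2)/sqrt(1-k\<^sup>2 * (sin \<psi>)\<^sup>2)) (at \<psi>)"
proof -
  define s where "s = sin \<psi>"
  define c where "c = cos \<psi>"
  define w where "w = sqrt(1+k\<^sup>2-k\<^sup>2 * s\<^sup>2)"
  define d where "d = sqrt(1-k\<^sup>2 * s\<^sup>2)"
  define r where "r = sqrt(1+k\<^sup>2)"
  define \<sigma> where "\<sigma> = s * w"
  have c0: "c > 0" unfolding c_def using \<psi> by (intro cos_gt_zero_pi) auto
  have sc: "s\<^sup>2 + c\<^sup>2 = 1" unfolding s_def c_def by simp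
  have cc: "c\<^sup>2 > 0" using c0 by simp
  have s2: "s\<^sup>2 < 1" using sc cc by linarith
  have k2: "k\<^sup>2 < 1" using k by (simp add: power_less_one_iff)
  have kk: "0 \<le> k\<^sup>2" by simp
  have "k\<^sup>2 * s\<^sup>2 \<le> k\<^sup>2 * 1" by (rule mult_left_mono) (use s2 in auto)
  then have ks: "k\<^sup>2 * s\<^sup>2 < 1" and ksk: "k\<^sup>2 * s\<^sup>2 \<le> k\<^sup>2" using k2 by linarith+
  have ks0: "0 \<le> k\<^sup>2 * s\<^sup>2" by simp
  have w2: "w\<^sup>2 = 1+k\<^sup>2-k\<^sup>2 * s\<^sup>2" unfolding w_def by (rule real_sqrt_pow2) (use ks kk in linarith)
  have d2: "d\<^sup>2 = 1-k\<^sup>2 * s\<^sup>2" unfolding d_def by (rule real_sqrt_pow2) (use ks kk in linarith)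
  have r2: "r\<^sup>2 = 1+k\<^sup>2" unfolding r_def by (rule real_sqrt_pow2) (use kk in linarith)
  have "0 < 1+k\<^sup>2-k\<^sup>2 * s\<^sup>2" using ks kk by linarith
  then have w0: "w > 0" unfolding w_def by simp
  have d0: "d > 0" unfolding d_def using ks by simp
  have k1: "0 < 1+k\<^sup>2" using kk by linarith
  then have r0: "r > 0" unfolding r_def by simp
  have wks: "(k * s)\<^sup>2 < w\<^sup>2" using w2 ks ksk k2 by (simp add: power_mult_distrib)
  have "\<bar>k * s\<bar> < w"
    by (rule power_less_imp_less_base[of _ 2]) (use wks w0 in auto)
  then have wp: "w + k * s > 0" and wm: "w - k * s > 0" by linarith+
  have c2: "c\<^sup>2 = 1 - s\<^sup>2" using sc by linarith
  have one_sig: "1 - \<sigma>\<^sup>2 = c\<^sup>2 * d\<^sup>2"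
    unfolding \<sigma>_def power_mult_distrib w2 d2 c2 by algebra
  have "c\<^sup>2 * d\<^sup>2 > 0" using cc d0 by simp
  then have sig1: "\<sigma>\<^sup>2 < 1" using one_sig by linarith
  then have "\<bar>\<sigma>\<bar> < 1" by (simp add: abs_square_less_1)
  then have sigb: "-1 < \<sigma>" "\<sigma> < 1" by linarith+
  have sq1: "sqrt (1 - \<sigma>\<^sup>2) = c * d"
    by (rule real_sqrt_unique) (use one_sig c0 d0 in \<open>auto simp: power_mult_distrib\<close>)
  have sqp: "sqrt (1 + \<kappa> * \<sigma>) = (w + k * s)/r"
  proof (rule real_sqrt_unique)
    have "((w + k * s)/r)\<^sup>2 = (w\<^sup>2 + 2 * k * s * w + k\<^sup>2 * s\<^sup>2)/(1+k\<^sup>2)"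
      unfolding power_divide r2 by (simp add: power2_sum power_mult_distrib algebra_simps)
    also have "\<dots> = 1 + \<kappa> * \<sigma>" unfolding w2 \<kappa> \<sigma>_def using k1
      by (simp add: field_simps)
    finally show "((w + k * s)/r)\<^sup>2 = 1 + \<kappa> * \<sigma>" .
    show "0 \<le> (w + k * s)/r" using wp r0 by simp
  qed
  have sqm: "sqrt (1 - \<kappa> * \<sigma>) = (w - k * s)/r"
  proof (rule real_sqrt_unique)
    have "((w - k * s)/r)\<^sup>2 = (w\<^sup>2 - 2 * k * s * w + k\<^sup>2 * s\<^sup>2)/(1+k\<^sup>2)"
      unfolding power_divide r2 by (simp add: power2_diff power_mult_distrib algebra_simps)
    also have "\<dots> = 1 - \<kappa> * \<sigma>" unfolding w2 \<kappa> \<sigma>_def using k1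
      by (simp add: field_simps)
    finally show "((w - k * s)/r)\<^sup>2 = 1 - \<kappa> * \<sigma>" .
    show "0 \<le> (w - k * s)/r" using wm r0 by simp
  qed
  have A: "((\<lambda>x. 1+k\<^sup>2-k\<^sup>2 * (sin x)\<^sup>2) has_real_derivative -(k\<^sup>2 * (2 * s * c))) (at \<psi>)"
    unfolding s_def c_def by (rule derivative_eq_intros refl | simp)+
  have wpos: "0 < 1+k\<^sup>2-k\<^sup>2 * s\<^sup>2" using ks kk by linarith
  have B: "((\<lambda>x. sqrt(1+k\<^sup>2-k\<^sup>2 * (sin x)\<^sup>2)) has_real_derivative inverse w / 2 * (-(k\<^sup>2 * (2 * s * c)))) (at \<psi>)"
    using DERIV_chain2[OF DERIV_real_sqrt A] wpos unfolding w_def s_def by simp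
  have D1: "((\<lambda>\<psi>. sin \<psi> * sqrt(1+k\<^sup>2-k\<^sup>2 * (sin \<psi>)\<^sup>2)) has_real_derivative c * (w\<^sup>2-k\<^sup>2 * s\<^sup>2)/w) (at \<psi>)"
  proof -
    have "((\<lambda>\<psi>. sin \<psi> * sqrt(1+k\<^sup>2-k\<^sup>2 * (sin \<psi>)\<^sup>2)) has_real_derivative
           c * w + s * (inverse w / 2 * (-(k\<^sup>2 * (2 * s * c))))) (at \<psi>)"
      using DERIV_mult[OF DERIV_sin B] unfolding c_def s_def w_def by (simp add: ac_simps)
    moreover have "c * w + s * (inverse w / 2 * (-(k\<^sup>2 * (2 * s * c)))) = c * (w\<^sup>2-k\<^sup>2 * s\<^sup>2)/w"
      using w0 by (simp add: field_simps power2_eq_square)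
    ultimately show ?thesis by simp
  qed
  have D2: "((\<lambda>\<psi>. arcsin (sin \<psi> * sqrt(1+k\<^sup>2-k\<^sup>2 * (sin \<psi>)\<^sup>2))) has_real_derivative
      inverse (sqrt (1 - \<sigma>\<^sup>2)) * (c * (w\<^sup>2-k\<^sup>2 * s\<^sup>2)/w)) (at \<psi>)"
    using DERIV_chain2[OF DERIV_arcsin[OF sigb, unfolded \<sigma>_def w_def s_def] D1] unfolding \<sigma>_def w_def s_def by simp
  have sas: "sin (arcsin \<sigma>) = \<sigma>" using sigb by (intro sin_arcsin) auto
  have D3: "((\<lambda>\<psi>. U (arcsin (sin \<psi> * sqrt(1+k\<^sup>2-k\<^sup>2 * (sin \<psi>)\<^sup>2)))) has_real_derivative
      (1/sqrt(1+\<kappa> * \<sigma>) + 1/sqrt(1-\<kappa> * \<sigma>))/2 * (inverse (sqrt (1 - \<sigma>\<^sup>2)) * (c * (w\<^sup>2-k\<^sup>2 * s\<^sup>2)/w))) (at \<psi>)"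
    using DERIV_chain2[OF Uder D2] unfolding \<sigma>_def w_def s_def sas[unfolded \<sigma>_def w_def s_def] by simp
  have fin: "(1/sqrt(1+\<kappa> * \<sigma>) + 1/sqrt(1-\<kappa> * \<sigma>))/2 * (inverse (sqrt (1 - \<sigma>\<^sup>2)) * (c * (w\<^sup>2-k\<^sup>2 * s\<^sup>2)/w)) = r / d"
  proof -
    have e: "w\<^sup>2-k\<^sup>2 * s\<^sup>2 = (w + k * s) * (w - k * s)" by (simp add: algebra_simps power2_eq_square)
    define P where "P = (w + k * s) * (w - k * s)"
    have P0: "P > 0" unfolding P_def using wp wm by simp
    have f1: "(1/((w + k * s)/r) + 1/((w - k * s)/r))/2 = r * w / P"
    proof -
      have q: "w * w - k * (k * (s * s)) > 0" using P0 unfolding P_def by (simp add: algebra_simps)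
      then have q2: "w * (w * 2) - k * (k * (s * (s * 2))) > 0" by simp
      show ?thesis unfolding P_def using wp wm r0 q q2 by (simp add: field_simps)
    qed
    show ?thesis unfolding sqp sqm sq1 e f1 P_def[symmetric] using P0 r0 c0 d0 w0
      by (simp add: field_simps)
  qed
  have "((\<lambda>\<psi>. U (arcsin (sin \<psi> * sqrt(1+k\<^sup>2-k\<^sup>2 * (sin \<psi>)\<^sup>2)))) has_real_derivative r / d) (at \<psi>)"
    by (rule DERIV_cong[OF D3]) (use fin in \<open>simp add: s_def\<close>)
  then show ?thesis by (simp add: r_def d_def s_def)
qed

lemma sig_facts:
  fixes k \<psi> :: real
  assumes k: "0 < k" "k < 1"
  shows "1 - (sin \<psi> * sqrt(1+k\<^sup>2-k\<^sup>2 * (sin \<psi>)\<^sup>2))\<^sup>2 = (cos \<psi>)\<^sup>2 * (1 - k\<^sup>2 * (sin \<psi>)\<^sup>2)"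
    and "-1 \<le> sin \<psi> * sqrt(1+k\<^sup>2-k\<^sup>2 * (sin \<psi>)\<^sup>2)"
    and "sin \<psi> * sqrt(1+k\<^sup>2-k\<^sup>2 * (sin \<psi>)\<^sup>2) \<le> 1"
    and "0 \<le> 1 - k\<^sup>2 * (sin \<psi>)\<^sup>2"
proof -
  define s where "s = sin \<psi>"
  define c where "c = cos \<psi>"
  have c2: "c\<^sup>2 = 1 - s\<^sup>2" unfolding s_def c_def by (simp add: cos_squared_eq)
  have s1: "s\<^sup>2 \<le> 1" unfolding s_def by (simp add: abs_square_le_1)
  have k2: "k\<^sup>2 < 1" using k by (simp add: power_less_one_iff)
  have kk: "0 \<le> k\<^sup>2" by simp
  have "k\<^sup>2 * s\<^sup>2 \<le> k\<^sup>2 * 1" by (rule mult_left_mono) (use s1 in auto)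
  then have ksk: "k\<^sup>2 * s\<^sup>2 \<le> k\<^sup>2" by simp
  have wn: "0 \<le> 1+k\<^sup>2-k\<^sup>2 * s\<^sup>2" using ksk kk by linarith
  show dn: "0 \<le> 1 - k\<^sup>2 * (sin \<psi>)\<^sup>2" using ksk k2 unfolding s_def by linarith
  have e: "1 - (s * sqrt(1+k\<^sup>2-k\<^sup>2 * s\<^sup>2))\<^sup>2 = c\<^sup>2 * (1 - k\<^sup>2 * s\<^sup>2)"
    unfolding power_mult_distrib real_sqrt_pow2[OF wn] c2 by algebra
  then show "1 - (sin \<psi> * sqrt(1+k\<^sup>2-k\<^sup>2 * (sin \<psi>)\<^sup>2))\<^sup>2 = (cos \<psi>)\<^sup>2 * (1 - k\<^sup>2 * (sin \<psi>)\<^sup>2)"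
    unfolding s_def c_def .
  have "0 \<le> c\<^sup>2 * (1 - k\<^sup>2 * s\<^sup>2)" using dn unfolding s_def by (intro mult_nonneg_nonneg) auto
  then have "(s * sqrt(1+k\<^sup>2-k\<^sup>2 * s\<^sup>2))\<^sup>2 \<le> 1" using e by linarith
  then have "\<bar>s * sqrt(1+k\<^sup>2-k\<^sup>2 * s\<^sup>2)\<bar> \<le> 1" by (simp add: abs_square_le_1)
  then show "-1 \<le> sin \<psi> * sqrt(1+k\<^sup>2-k\<^sup>2 * (sin \<psi>)\<^sup>2)"
    and "sin \<psi> * sqrt(1+k\<^sup>2-k\<^sup>2 * (sin \<psi>)\<^sup>2) \<le> 1" unfolding s_def by linarith+
qed

lemma mono_from_deriv:
  fixes F F' :: "real \<Rightarrow> real"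
  assumes "\<And>x. (F has_real_derivative F' x) (at x)" "\<And>x. F' x > 0" "a < b"
  shows "F a < F b"
  using assms(3)
proof (rule DERIV_pos_imp_increasing)
  fix x show "\<exists>y. (F has_real_derivative y) (at x) \<and> y > 0" using assms(1,2) by blast
qed

theorem theorem10:
  fixes \<kappa> lam k :: real and U \<phi> :: "real \<Rightarrow> real"
  assumes "0 < \<kappa>" "\<kappa> < 1"
    and "lam = sqrt (1 - \<kappa>\<^sup>2)"
    and "0 < k" "k < 1" "k\<^sup>2 = (1 - lam) / (1 + lam)"
    and "U = integral0 (\<lambda>\<theta>. hyp2F1 (1/4) (3/4) (1/2) (\<kappa>\<^sup>2 * (sin \<theta>)\<^sup>2))"
    and "\<phi> 0 = 0"
    and "\<forall>\<^sub>F u in nhds 0. U (\<phi> u) = u"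
  shows "\<forall>\<^sub>F u in nhds 0.
           (cos (\<phi> u))\<^sup>2 = (jcn k ((1 + k\<^sup>2) powr (-1/2) * u))\<^sup>2
                           * (jdn k ((1 + k\<^sup>2) powr (-1/2) * u))\<^sup>2"
proof -
  note kap = assms(1,2) and lamd = assms(3) and k = assms(4,5) and kl = assms(6)
  have kk: "0 \<le> k\<^sup>2" by simp
  have k1: "0 < 1 + k\<^sup>2" using kk by linarith
  have k2: "k\<^sup>2 < 1" using k by (simp add: power_less_one_iff)
  have kap2: "\<kappa>\<^sup>2 < 1" using kap by (simp add: power_less_one_iff)
  have kap2': "0 \<le> 1 - \<kappa>\<^sup>2" using kap2 by linarith
  have lam0: "0 \<le> lam" unfolding lamd using kap2' by simp
  have lam2: "lam\<^sup>2 = 1 - \<kappa>\<^sup>2" unfolding lamd using kap2' by simp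
  have "k\<^sup>2 * (1 + lam) = 1 - lam" using kl lam0 by (simp add: field_simps)
  then have lamk: "lam = (1 - k\<^sup>2) / (1 + k\<^sup>2)" using k1 by (simp add: field_simps)
  have "\<kappa>\<^sup>2 = (2 * k / (1 + k\<^sup>2))\<^sup>2"
  proof -
    have "\<kappa>\<^sup>2 = 1 - lam\<^sup>2" using lam2 by simp
    also have "\<dots> = (2 * k / (1 + k\<^sup>2))\<^sup>2"
    proof -
      have e1: "(2 * k)\<^sup>2 + (1 - k\<^sup>2)\<^sup>2 = (1 + k\<^sup>2)\<^sup>2" by (simp add: power2_eq_square algebra_simps)
      have "(2 * k / (1 + k\<^sup>2))\<^sup>2 + ((1 - k\<^sup>2) / (1 + k\<^sup>2))\<^sup>2 = 1"
        unfolding power_divide add_divide_distrib[symmetric] e1 using k1 by simp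
      then show ?thesis unfolding lamk by linarith
    qed
    finally show ?thesis .
  qed
  then have kapk: "\<kappa> = 2 * k / (1 + k\<^sup>2)"
    using kap k k1 by (simp add: power2_eq_iff_nonneg)
  define f where "f \<theta> = (1/sqrt(1+\<kappa> * sin \<theta>) + 1/sqrt(1-\<kappa> * sin \<theta>))/2" for \<theta>
  have ksin: "\<bar>\<kappa> * sin \<theta>\<bar> < 1" for \<theta>
  proof -
    have "\<bar>\<kappa> * sin \<theta>\<bar> = \<kappa> * \<bar>sin \<theta>\<bar>" using kap by (simp add: abs_mult)
    also have "\<dots> \<le> \<kappa> * 1" using kap by (intro mult_left_mono) auto
    finally show ?thesis using kap by linarith
  qed
  have ksin1: "0 < 1 + \<kappa> * sin \<theta>" "0 < 1 - \<kappa> * sin \<theta>" for \<theta>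
    using ksin[of \<theta>] by linarith+
  have hf: "hyp2F1 (1/4) (3/4) (1/2) (\<kappa>\<^sup>2 * (sin \<theta>)\<^sup>2) = f \<theta>" for \<theta>
    using hyp_closed[OF ksin[of \<theta>]] unfolding f_def by (simp add: power_mult_distrib)
  have Ueq: "U = integral0 f" using assms(7) hf by simp
  have fcont: "continuous_on UNIV f"
    unfolding f_def using ksin1 by (intro continuous_intros) (auto simp: less_imp_neq[symmetric])
  have fpos: "f x > 0" for x unfolding f_def using ksin1[of x] by (simp add: add_pos_pos)
  have Uder: "(U has_real_derivative f x) (at x)" for x
    unfolding Ueq by (rule integral0_deriv[OF fcont])
  define g where "g \<theta> = 1 / sqrt (1 - k\<^sup>2 * (sin \<theta>)\<^sup>2)" for \<theta>
  have gden: "0 < 1 - k\<^sup>2 * (sin \<theta>)\<^sup>2" for \<theta>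
  proof -
    have "k\<^sup>2 * (sin \<theta>)\<^sup>2 \<le> k\<^sup>2 * 1" by (rule mult_left_mono) (auto simp: abs_square_le_1)
    then show ?thesis using k2 by linarith
  qed
  have ellEq: "ellF k = integral0 g" unfolding ellF_def g_def by (rule ext) simp
  have gcont: "continuous_on UNIV g"
    unfolding g_def using gden by (intro continuous_intros) (auto simp: less_imp_neq[symmetric])
  have gpos: "g x > 0" for x unfolding g_def using gden[of x] by simp
  have Eder: "(ellF k has_real_derivative g x) (at x)" for x
    unfolding ellEq by (rule integral0_deriv[OF gcont])
  have Umono: "U a < U b" if "a < b" for a b
    using mono_from_deriv[OF Uder fpos that] .
  have Emono: "ellF k a < ellF k b" if "a < b" for a b
    using mono_from_deriv[OF Eder gpos that] .
  have U0: "U 0 = 0" unfolding Ueq integral0_def by simp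
  have E0: "ellF k 0 = 0" unfolding ellEq integral0_def by simp
  define \<Phi> where "\<Phi> \<psi> = arcsin (sin \<psi> * sqrt(1+k\<^sup>2-k\<^sup>2 * (sin \<psi>)\<^sup>2))" for \<psi>
  define S where "S = {-(pi/2)<..<pi/2}"
  define G where "G \<psi> = U (\<Phi> \<psi>) - sqrt (1+k\<^sup>2) * ellF k \<psi>" for \<psi>
  have Gder: "(G has_real_derivative 0) (at \<psi> within S)" if "\<psi> \<in> S" for \<psi>
  proof -
    have "\<bar>\<psi>\<bar> < pi/2" using that unfolding S_def by auto
    from key_deriv[OF k this Uder[unfolded f_def] kapk]
    have "((\<lambda>\<psi>. U (\<Phi> \<psi>)) has_real_derivative sqrt(1+k\<^sup>2)/sqrt(1-k\<^sup>2 * (sin \<psi>)\<^sup>2)) (at \<psi>)"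
      unfolding \<Phi>_def .
    note UP = this
    have "(G has_real_derivative sqrt(1+k\<^sup>2)/sqrt(1-k\<^sup>2 * (sin \<psi>)\<^sup>2) - sqrt (1+k\<^sup>2) * g \<psi>) (at \<psi>)"
      unfolding G_def using DERIV_diff[OF UP DERIV_cmult[OF Eder[of \<psi>]]] by simp
    then show ?thesis unfolding g_def by (simp add: has_field_derivative_at_within)
  qed
  obtain C where C: "\<forall>x\<in>S. G x = C"
    using has_field_derivative_zero_constant[of S G] Gder unfolding S_def by auto
  have "0 \<in> S" unfolding S_def by simp
  then have GS: "G x = 0" if "x \<in> S" for x
    using C that U0 E0 unfolding G_def \<Phi>_def by force
  have Phicont: "continuous_on {-(pi/2)..pi/2} \<Phi>"
    unfolding \<Phi>_def using sig_facts(2,3)[OF k] by (intro continuous_intros) auto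
  have Phi1: "\<Phi> (pi/2) = pi/2" and Phim1: "\<Phi> (-(pi/2)) = -(pi/2)" unfolding \<Phi>_def by simp_all
  have pk: "(1 + k\<^sup>2) powr (-1/2) = 1 / sqrt (1 + k\<^sup>2)"
    using k1 by (simp add: powr_minus_divide powr_half_sqrt del: powr_minus)
  define m where "m = min (U (pi/2)) (- U (-(pi/2)))"
  have m0: "m > 0" unfolding m_def using Umono[of 0 "pi/2"] Umono[of "-(pi/2)" 0] U0 by simp
  have ev: "\<forall>\<^sub>F u in nhds 0. \<bar>u\<bar> < m"
    using m0 unfolding eventually_nhds_metric by (intro exI[of _ m]) (auto simp: dist_real_def)
  show ?thesis
    using eventually_conj[OF assms(9) ev]
  proof (rule eventually_mono)
    fix u assume u: "U (\<phi> u) = u \<and> \<bar>u\<bar> < m"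
    define y where "y = \<phi> u"
    have Uy: "U y = u" using u y_def by simp
    have ylo: "-(pi/2) < y"
    proof (rule ccontr)
      assume "\<not> -(pi/2) < y"
      then have "y = -(pi/2) \<or> y < -(pi/2)" by linarith
      then have "U y \<le> U (-(pi/2))" using Umono[of y "-(pi/2)"] by (metis order.refl less_imp_le)
      then show False using u Uy unfolding m_def by auto
    qed
    have yhi: "y < pi/2"
    proof (rule ccontr)
      assume "\<not> y < pi/2"
      then have "y = pi/2 \<or> pi/2 < y" by linarith
      then have "U (pi/2) \<le> U y" using Umono[of "pi/2" y] by (metis order.refl less_imp_le)
      then show False using u Uy unfolding m_def by auto
    qed
    obtain \<psi> where \<psi>: "-(pi/2) \<le> \<psi>" "\<psi> \<le> pi/2" "\<Phi> \<psi> = y"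
      using IVT'[of \<Phi> "-(pi/2)" y "pi/2"] Phicont Phi1 Phim1 ylo yhi by auto
    have "\<psi> \<noteq> pi/2"
    proof
      assume "\<psi> = pi/2" then have "y = pi/2" using \<psi>(3) Phi1 by metis
      then show False using yhi by simp
    qed
    moreover have "\<psi> \<noteq> -(pi/2)"
    proof
      assume "\<psi> = -(pi/2)" then have "y = -(pi/2)" using \<psi>(3) Phim1 by metis
      then show False using ylo by simp
    qed
    ultimately have "\<psi> \<in> S" using \<psi> unfolding S_def by auto
    then have "G \<psi> = 0" by (rule GS)
    then have "u = sqrt (1+k\<^sup>2) * ellF k \<psi>" using Uy \<psi>(3) unfolding G_def by simp
    then have Ev: "ellF k \<psi> = (1 + k\<^sup>2) powr (-1/2) * u" unfolding pk using k1 by simp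
    have jam: "jam k ((1 + k\<^sup>2) powr (-1/2) * u) = \<psi>"
      unfolding jam_def
    proof (rule the_equality)
      show "ellF k \<psi> = (1 + k\<^sup>2) powr (-1/2) * u" by (rule Ev)
      fix t assume "ellF k t = (1 + k\<^sup>2) powr (-1/2) * u"
      then show "t = \<psi>" using Ev Emono[of t \<psi>] Emono[of \<psi> t] by (cases t \<psi> rule: linorder_cases) auto
    qed
    have "(cos y)\<^sup>2 = 1 - (sin \<psi> * sqrt(1+k\<^sup>2-k\<^sup>2 * (sin \<psi>)\<^sup>2))\<^sup>2"
      unfolding \<psi>(3)[symmetric] \<Phi>_def using sig_facts(2,3)[OF k, of \<psi>]
      by (simp add: cos_arcsin abs_square_le_1 abs_le_iff)
    also have "\<dots> = (cos \<psi>)\<^sup>2 * (1 - k\<^sup>2 * (sin \<psi>)\<^sup>2)" by (rule sig_facts(1)[OF k])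
    finally show "(cos (\<phi> u))\<^sup>2 = (jcn k ((1 + k\<^sup>2) powr (-1/2) * u))\<^sup>2
                           * (jdn k ((1 + k\<^sup>2) powr (-1/2) * u))\<^sup>2"
      unfolding jcn_def jdn_def jsn_def jam y_def[symmetric] using sig_facts(4)[OF k, of \<psi>] by simp
  qed
qed

end
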